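(* Let $r\ge1$, $B>0$, $P$ a finite arc set with $c\in\mathbb{R}_{\ge0}^P$ and $P_+=\{a\in P:c_a>0\}\neq\emptyset$. The minimum of $\sum_{a\in P_+}c_a y_a$ over $y\in\mathbb{R}_{>0}^{P_+}$ with $\sum_{a\in P_+}y_a^{-r}=B$ is attained uniquely at $y_a=\dfrac{\left(\sum_{a'\in P}c_{a'}^{r/(r+1)}\right)^{1/r}}{c_a^{1/(r+1)}B^{1/r}}$ for $a\in P_+$, and the minimum value equals $\left(\sum_{a\in P}\left(c_a/B^{1/r}\right)^{r/(r+1)}\right)^{(r+1)/r}$. Consequently, the optimal value (infimum) of the Network Design Problem with $\bar y\equiv\infty$ equals $\min_{P\in\mathcal{P}}\left[\left(\sum_{a\in P}c'_a\right)^{(r+1)/r}+\sum_{a\in P}\gamma_a\right]$ where $c'_a=(c_a/B^{1/r})^{r/(r+1)}$ and $\mathcal{P}$ is the set of $s$--$t$ paths of $G$.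
   Context: Fix $r\ge1$. Let $G=(V,A)$ be a weakly connected directed graph with distinct source $s$ and sink $t$; $\mathcal P$ denotes the set of (arc sets of) $s$--$t$ paths in the underlying undirected graph. For $y\in\mathbb{R}_{\ge 0}^A$ let $\operatorname{supp}(y)=\{a: y_a>0\}$, $G'=(V,\operatorname{supp}(y))$ with node-arc incidence matrix $\Gamma'$, and $R^y_{s,t}=\min\{\sum_{a\in\operatorname{supp}(y)} |f_a|^{r+1}/y_a^{r} : \Gamma' f=\mathbf{1}_s-\mathbf{1}_t\}$ ($=\infty$ if $s,t$ are disconnected in $G'$). The Network Design Problem, given $c,\gamma\in\mathbb{R}_{\ge0}^A$, bounds $\bar y\in(\mathbb{R}_{\ge0}\cup\{\infty\})^A$ and $B>0$, asks for the infimum of $\sum_{a\in A}(c_a y_a+\gamma_a x_a)$ over $x\in\{0,1\}^A$, $y\in\mathbb{R}_{\ge0}^A$ subject to $R^y_{s,t}\le B$, $y_a\le \bar y_a$, and $y_a>0\Rightarrow x_a=1$ for all $a$. *)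

theory Defs
  imports "HOL-Analysis.Analysis"
begin

definition undirected_rel :: "'a set \<Rightarrow> ('a \<Rightarrow> 'v) \<Rightarrow> ('a \<Rightarrow> 'v) \<Rightarrow> ('v \<times> 'v) set" where
  "undirected_rel A tail head =
     {(tail a, head a) | a. a \<in> A} \<union> {(head a, tail a) | a. a \<in> A}"

definition weakly_connected ::
  "'v set \<Rightarrow> 'a set \<Rightarrow> ('a \<Rightarrow> 'v) \<Rightarrow> ('a \<Rightarrow> 'v) \<Rightarrow> bool" where
  "weakly_connected V A tail head \<longleftrightarrow>
     (\<forall>u\<in>V. \<forall>v\<in>V. (u, v) \<in> (undirected_rel A tail head)\<^sup>*)"

definition supp :: "'a set \<Rightarrow> ('a \<Rightarrow> real) \<Rightarrow> 'a set" where
  "supp A y = {a \<in> A. y a > 0}"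

text \<open>Gamma' f = 1_s - 1_t for the node-arc incidence matrix of (V, S)
  (entry +1 at the tail, -1 at the head of an arc).\<close>
definition is_unit_flow ::
  "'v set \<Rightarrow> 'a set \<Rightarrow> ('a \<Rightarrow> 'v) \<Rightarrow> ('a \<Rightarrow> 'v) \<Rightarrow> 'v \<Rightarrow> 'v \<Rightarrow> ('a \<Rightarrow> real) \<Rightarrow> bool" where
  "is_unit_flow V S tail head s t f \<longleftrightarrow>
     (\<forall>v\<in>V. (\<Sum>a\<in>{a\<in>S. tail a = v}. f a) - (\<Sum>a\<in>{a\<in>S. head a = v}. f a)
            = (if v = s then 1 else if v = t then -1 else 0))"

text \<open>R^y_{s,t}; the infimum of the empty set in ereal is \<infinity>.\<close>
definition eff_res ::
  "'v set \<Rightarrow> 'a set \<Rightarrow> ('a \<Rightarrow> 'v) \<Rightarrow> ('a \<Rightarrow> 'v) \<Rightarrow> 'v \<Rightarrow> 'v \<Rightarrow> real \<Rightarrow> ('a \<Rightarrow> real) \<Rightarrow> ereal" where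
  "eff_res V A tail head s t r y =
     Inf {ereal (\<Sum>a\<in>supp A y. \<bar>f a\<bar> powr (r + 1) / (y a) powr r) | f.
            is_unit_flow V (supp A y) tail head s t f}"

definition st_path ::
  "'a set \<Rightarrow> ('a \<Rightarrow> 'v) \<Rightarrow> ('a \<Rightarrow> 'v) \<Rightarrow> 'v \<Rightarrow> 'v \<Rightarrow> 'a set \<Rightarrow> bool" where
  "st_path A tail head s t P \<longleftrightarrow>
     (\<exists>as vs. distinct as \<and> distinct vs \<and> length vs = length as + 1 \<and>
        vs ! 0 = s \<and> vs ! length as = t \<and> set as \<subseteq> A \<and> P = set as \<and>
        (\<forall>i < length as.
            (tail (as ! i) = vs ! i \<and> head (as ! i) = vs ! (i + 1)) \<or>
            (head (as ! i) = vs ! i \<and> tail (as ! i) = vs ! (i + 1))))"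

definition NDP_value ::
  "'v set \<Rightarrow> 'a set \<Rightarrow> ('a \<Rightarrow> 'v) \<Rightarrow> ('a \<Rightarrow> 'v) \<Rightarrow> 'v \<Rightarrow> 'v \<Rightarrow> real \<Rightarrow>
   ('a \<Rightarrow> real) \<Rightarrow> ('a \<Rightarrow> real) \<Rightarrow> ('a \<Rightarrow> ereal) \<Rightarrow> real \<Rightarrow> ereal" where
  "NDP_value V A tail head s t r c \<gamma> ybar B =
     Inf {ereal (\<Sum>a\<in>A. c a * y a + \<gamma> a * x a) | x y.
            (\<forall>a\<in>A. x a \<in> {0, 1}) \<and> (\<forall>a\<in>A. y a \<ge> 0) \<and>
            eff_res V A tail head s t r y \<le> ereal B \<and>
            (\<forall>a\<in>A. ereal (y a) \<le> ybar a) \<and>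
            (\<forall>a\<in>A. y a > 0 \<longrightarrow> x a = 1)}"

end

theory Submission
  imports Defs
begin


lemma exp_strict: "x \<noteq> 0 \<Longrightarrow> 1 + x < exp (x::real)"
proof -
  assume x: "x \<noteq> 0"
  show ?thesis
  proof (cases "1 + x/2 \<ge> 0")
    case True
    have "(1 + x/2)^2 \<le> exp (x/2) ^ 2"
      using True exp_ge_add_one_self[of "x/2"] by (intro power_mono) auto
    also have "exp (x/2) ^ 2 = exp x" by (simp add: power2_eq_square flip: exp_add)
    finally have "(1 + x/2)^2 \<le> exp x" .
    moreover have "x*x > 0" using x by (metis not_real_square_gt_zero)
    then have "1 + x < (1 + x/2)^2" by (simp add: power2_eq_square field_simps)
    ultimately show ?thesis by linarith
  next
    case False
    then have "1 + x < 0" by linarith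
    then show ?thesis using exp_gt_zero[of x] by linarith
  qed
qed

lemma bern:
  fixes r t :: real
  assumes "r > 0" "t > 0"
  shows "r * t + t powr (- r) \<ge> r + 1" and "t \<noteq> 1 \<Longrightarrow> r * t + t powr (- r) > r + 1"
proof -
  define u where "u = ln t"
  have tu: "t = exp u" using assms u_def by simp
  have p: "t powr (-r) = exp (-r * u)" using assms by (simp add: powr_def u_def)
  have e1: "exp (-r*u) \<ge> 1 + (-r*u)" by (rule exp_ge_add_one_self)
  have e2: "exp u \<ge> 1 + u" by (rule exp_ge_add_one_self)
  have e2': "r + r*u \<le> r*exp u" using mult_left_mono[OF e2, of r] assms by (simp add: algebra_simps)
  have eq: "r * t + t powr (-r) = r*exp u + exp(-r*u)" using p tu by simp
  show "r * t + t powr (- r) \<ge> r + 1"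
    using e1 e2' unfolding eq by linarith
  assume "t \<noteq> 1"
  then have "u \<noteq> 0" using tu by auto
  then have e3: "exp u > 1 + u" by (rule exp_strict)
  have e3': "r + r*u < r*exp u" using mult_strict_left_mono[OF e3 assms(1)] by (simp add: algebra_simps)
  show "r * t + t powr (- r) > r + 1"
    using e1 e3' unfolding eq by linarith
qed

lemma tangent:
  fixes D Y y r :: real
  assumes "D > 0" "Y > 0" "y > 0" "r > 0"
  shows "D*y + (D * Y powr (r+1) / r) * y powr (-r) \<ge> D*Y + (D * Y powr (r+1) / r) * Y powr (-r)"
    and "y \<noteq> Y \<Longrightarrow> D*y + (D * Y powr (r+1) / r) * y powr (-r) > D*Y + (D * Y powr (r+1) / r) * Y powr (-r)"
proof -
  define t where "t = y / Y"
  have t: "t > 0" using assms t_def by simp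
  have yt: "y = t * Y" using assms t_def by simp
  have yp: "y powr (-r) = t powr (-r) * Y powr (-r)" using yt t assms by (simp add: powr_mult)
  have YY: "Y powr (r+1) * Y powr (-r) = Y" using assms by (simp flip: powr_add)
  have aux: "(D * a / r) * (c * b) = D / r * c * (a * b)" for a b c :: real
    by (simp add: field_simps)
  have L: "D*y + (D * Y powr (r+1) / r) * y powr (-r) = D*Y/r * (r*t + t powr (-r))"
  proof -
    have "D*y + (D * Y powr (r+1) / r) * y powr (-r) = D*t*Y + D / r * t powr (-r) * Y"
      unfolding yp aux YY by (simp add: yt)
    also have "\<dots> = D*Y/r * (r*t + t powr (-r))" using assms by (simp add: field_simps)
    finally show ?thesis .
  qed
  have R: "D*Y + (D * Y powr (r+1) / r) * Y powr (-r) = D*Y/r * (r + 1)"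
  proof -
    have "D*Y + (D * Y powr (r+1) / r) * Y powr (-r) = D*Y + D / r * Y"
      using aux[of "Y powr (r+1)" 1 "Y powr (-r)"] YY by simp
    also have "\<dots> = D*Y/r * (r + 1)" using assms by (simp add: field_simps)
    finally show ?thesis .
  qed
  have pos: "D*Y/r > 0" using assms by simp
  show "D*y + (D * Y powr (r+1) / r) * y powr (-r) \<ge> D*Y + (D * Y powr (r+1) / r) * Y powr (-r)"
    unfolding L R using bern(1)[OF assms(4) t] pos by (intro mult_left_mono) auto
  assume "y \<noteq> Y"
  then have "t \<noteq> 1" using yt by auto
  then show "D*y + (D * Y powr (r+1) / r) * y powr (-r) > D*Y + (D * Y powr (r+1) / r) * Y powr (-r)"
    unfolding L R using bern(2)[OF assms(4) t \<open>t \<noteq> 1\<close>] pos by (intro mult_strict_left_mono) auto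
qed



lemma val_eq:
  fixes r B :: real
  assumes "r > 0" "B > 0" "\<forall>a\<in>P. d a \<ge> 0"
  shows "(\<Sum>a\<in>P. (d a / B powr (1 / r)) powr (r / (r + 1))) powr ((r + 1) / r)
         = (\<Sum>a\<in>P. d a powr (r / (r + 1))) powr ((r + 1) / r) / B powr (1 / r)"
proof -
  have "\<forall>a\<in>P. (d a / B powr (1 / r)) powr (r / (r + 1)) = d a powr (r / (r + 1)) / B powr (1/(r+1))"
    using assms by (auto simp: powr_divide powr_powr)
  then have "(\<Sum>a\<in>P. (d a / B powr (1 / r)) powr (r / (r + 1))) = (\<Sum>a\<in>P. d a powr (r / (r + 1))) / B powr (1/(r+1))"
    by (simp add: sum_divide_distrib)
  moreover have "(B powr (1/(r+1))) powr ((r + 1) / r) = B powr (1/r)"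
    using assms by (simp add: powr_powr)
  moreover have "(\<Sum>a\<in>P. d a powr (r / (r + 1))) \<ge> 0" by (simp add: sum_nonneg)
  ultimately show ?thesis using assms by (simp add: powr_divide)
qed

lemma part1:
  fixes r B :: real and P :: "'a set" and d :: "'a \<Rightarrow> real"
  assumes r: "r \<ge> 1" and B: "B > 0"
    and fin: "finite P" and dnn: "\<forall>a\<in>P. d a \<ge> 0" and ne: "{a\<in>P. d a > 0} \<noteq> {}"
  shows "let Pp = {a\<in>P. d a > 0};
             S = (\<Sum>a'\<in>P. d a' powr (r / (r + 1)));
             ys = (\<lambda>a. S powr (1 / r) / (d a powr (1 / (r + 1)) * B powr (1 / r)));
             feas = (\<lambda>y :: 'a \<Rightarrow> real. (\<forall>a\<in>Pp. y a > 0) \<and> (\<Sum>a\<in>Pp. y a powr (- r)) = B);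
             obj = (\<lambda>y :: 'a \<Rightarrow> real. \<Sum>a\<in>Pp. d a * y a)
         in feas ys \<and>
            (\<forall>y. feas y \<longrightarrow> obj ys \<le> obj y) \<and>
            (\<forall>y. feas y \<and> obj y = obj ys \<longrightarrow> (\<forall>a\<in>Pp. y a = ys a)) \<and>
            obj ys = (\<Sum>a\<in>P. (d a / B powr (1 / r)) powr (r / (r + 1))) powr ((r + 1) / r)"
proof -
  define Pp where "Pp = {a\<in>P. d a > 0}"
  define al where "al = r / (r + 1)"
  define S where "S = (\<Sum>a'\<in>P. d a' powr al)"
  define ys where "ys = (\<lambda>a. S powr (1 / r) / (d a powr (1 / (r + 1)) * B powr (1 / r)))"
  define feas where "feas = (\<lambda>y :: 'a \<Rightarrow> real. (\<forall>a\<in>Pp. y a > 0) \<and> (\<Sum>a\<in>Pp. y a powr (- r)) = B)"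
  define obj where "obj = (\<lambda>y :: 'a \<Rightarrow> real. \<Sum>a\<in>Pp. d a * y a)"
  have r0: "r > 0" using r by simp
  have al0: "al > 0" using r0 by (simp add: al_def)
  have finPp: "finite Pp" using fin by (simp add: Pp_def)
  have PpP: "Pp \<subseteq> P" by (auto simp: Pp_def)
  have SPp: "S = (\<Sum>a\<in>Pp. d a powr al)"
  proof -
    have "\<forall>i\<in>P - Pp. d i powr al = 0"
    proof
      fix i assume "i \<in> P - Pp"
      then have "d i = 0" using dnn by (force simp: Pp_def)
      then show "d i powr al = 0" by simp
    qed
    then show ?thesis unfolding S_def using fin PpP by (intro sum.mono_neutral_right) auto
  qed
  have Spos: "S > 0" unfolding SPp using finPp ne by (intro sum_pos) (auto simp: Pp_def)
  define K where "K = S powr (1/r) / B powr (1/r)"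
  have Kpos: "K > 0" using Spos B by (simp add: K_def)
  have ysK: "ys a = K / d a powr (1/(r+1))" for a
    by (simp add: ys_def K_def)
  have yspos: "ys a > 0" if "a \<in> Pp" for a
    using that Kpos by (simp add: ysK Pp_def)
  have Kr: "K powr (-r) = B / S"
    using Spos B r0 by (simp add: K_def powr_divide powr_powr powr_minus_divide)
  have yspow: "ys a powr (-r) = B / S * d a powr al" if "a \<in> Pp" for a
  proof -
    have da: "d a > 0" using that by (simp add: Pp_def)
    have "ys a powr (-r) = K powr (-r) / (d a powr (1/(r+1))) powr (-r)"
      using Kpos da by (simp add: ysK powr_divide)
    also have "(d a powr (1/(r+1))) powr (-r) = 1 / d a powr al"
      using da r0 by (simp add: powr_powr al_def powr_minus_divide)
    finally show ?thesis by (simp add: Kr)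
  qed
  have feas_ys: "feas ys"
  proof -
    have "(\<Sum>a\<in>Pp. ys a powr (- r)) = (\<Sum>a\<in>Pp. B / S * d a powr al)"
      by (rule sum.cong) (auto simp: yspow)
    also have "\<dots> = B / S * (\<Sum>a\<in>Pp. d a powr al)" by (simp add: sum_distrib_left)
    also have "\<dots> = B" using Spos by (simp add: SPp[symmetric])
    finally show ?thesis using yspos by (simp add: feas_def)
  qed
  have dys: "d a * ys a = K * d a powr al" if "a \<in> Pp" for a
  proof -
    have da: "d a > 0" using that by (simp add: Pp_def)
    have "1 - 1/(r+1) = al" using r0 by (simp add: al_def field_simps)
    then have "d a powr al = d a powr (1 - 1/(r+1))" by simp
    also have "\<dots> = d a powr 1 / d a powr (1/(r+1))" by (rule powr_diff)
    also have "\<dots> = d a / d a powr (1/(r+1))" using da by simp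
    finally have e: "d a / d a powr (1/(r+1)) = d a powr al" by simp
    have "d a * ys a = K * (d a / d a powr (1/(r+1)))" by (simp add: ysK)
    then show ?thesis using e by simp
  qed
  have objys: "obj ys = K * S"
    unfolding obj_def SPp sum_distrib_left by (rule sum.cong) (auto simp: dys)
  define Lam where "Lam = K powr (r+1) / r"
  have lam: "d a * ys a powr (r+1) / r = Lam" if "a \<in> Pp" for a
  proof -
    have da: "d a > 0" using that by (simp add: Pp_def)
    have "(d a powr (1/(r+1))) powr (r+1) = d a powr ((1/(r+1)) * (r+1))" by (rule powr_powr)
    also have "(1/(r+1)) * (r+1) = 1" using r0 by simp
    finally have e: "(d a powr (1/(r+1))) powr (r+1) = d a" using da by simp
    have "ys a powr (r+1) = K powr (r+1) / (d a powr (1/(r+1))) powr (r+1)"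
      unfolding ysK using Kpos da by (auto intro!: powr_divide)
    then have "ys a powr (r+1) = K powr (r+1) / d a" by (simp only: e)
    then show ?thesis using da by (simp add: Lam_def)
  qed
  have ineq: "d a * y a + Lam * y a powr (-r) \<ge> d a * ys a + Lam * ys a powr (-r)"
    if "a \<in> Pp" "y a > 0" for a y
  proof -
    have "d a > 0" using that by (simp add: Pp_def)
    from tangent(1)[OF this yspos[OF that(1)] that(2) r0] show ?thesis unfolding lam[OF that(1)] .
  qed
  have sineq: "d a * y a + Lam * y a powr (-r) > d a * ys a + Lam * ys a powr (-r)"
    if "a \<in> Pp" "y a > 0" "y a \<noteq> ys a" for a y
  proof -
    have "d a > 0" using that by (simp add: Pp_def)
    from tangent(2)[OF this yspos[OF that(1)] that(2) r0 that(3)] show ?thesis unfolding lam[OF that(1)] .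
  qed
  have sumid: "(\<Sum>a\<in>Pp. d a * y a + Lam * y a powr (-r)) = obj y + Lam * B"
    if "feas y" for y
  proof -
    have "(\<Sum>a\<in>Pp. Lam * y a powr (-r)) = Lam * (\<Sum>a\<in>Pp. y a powr (-r))" by (rule sum_distrib_left[symmetric])
    then show ?thesis using that by (simp add: feas_def obj_def sum.distrib)
  qed
  have opt: "obj ys \<le> obj y" if "feas y" for y
  proof -
    have "(\<Sum>a\<in>Pp. d a * ys a + Lam * ys a powr (-r)) \<le> (\<Sum>a\<in>Pp. d a * y a + Lam * y a powr (-r))"
      using that ineq by (intro sum_mono) (auto simp: feas_def)
    then show ?thesis using sumid[OF that] sumid[OF feas_ys] by simp
  qed
  have uniq: "\<forall>a\<in>Pp. y a = ys a" if "feas y" "obj y = obj ys" for y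
  proof (rule ccontr)
    assume "\<not> (\<forall>a\<in>Pp. y a = ys a)"
    then obtain a0 where a0: "a0 \<in> Pp" "y a0 \<noteq> ys a0" by blast
    have "(\<Sum>a\<in>Pp. d a * ys a + Lam * ys a powr (-r)) < (\<Sum>a\<in>Pp. d a * y a + Lam * y a powr (-r))"
    proof (rule sum_strict_mono_ex1[OF finPp])
      show "\<forall>a\<in>Pp. d a * ys a + Lam * ys a powr (-r) \<le> d a * y a + Lam * y a powr (-r)"
        using that(1) ineq by (auto simp: feas_def)
      have "y a0 > 0" using that(1) a0 by (auto simp: feas_def)
      then have "d a0 * ys a0 + Lam * ys a0 powr (-r) < d a0 * y a0 + Lam * y a0 powr (-r)"
        using sineq[of a0 y] a0 by blast
      then show "\<exists>a\<in>Pp. d a * ys a + Lam * ys a powr (-r) < d a * y a + Lam * y a powr (-r)"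
        using a0 by blast
    qed
    then show False using sumid[OF that(1)] sumid[OF feas_ys] that(2) by simp
  qed
  have val: "obj ys = (\<Sum>a\<in>P. (d a / B powr (1 / r)) powr (r / (r + 1))) powr ((r + 1) / r)"
  proof -
    have "(\<Sum>a\<in>P. (d a / B powr (1 / r)) powr (r / (r + 1))) powr ((r + 1) / r)
       = S powr ((r + 1) / r) / B powr (1 / r)"
      unfolding S_def al_def by (rule val_eq[OF r0 B dnn])
    also have "S powr ((r + 1) / r) = S powr (1/r) * S"
    proof -
      have "(r+1)/r = 1/r + 1" using r0 by (simp add: field_simps)
      then have "S powr ((r + 1) / r) = S powr (1/r) * S powr 1" by (simp only: powr_add)
      then show ?thesis using Spos by simp
    qed
    finally show ?thesis unfolding objys K_def by simp
  qed
  have "feas ys \<and> (\<forall>y. feas y \<longrightarrow> obj ys \<le> obj y) \<and>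
     (\<forall>y. feas y \<and> obj y = obj ys \<longrightarrow> (\<forall>a\<in>Pp. y a = ys a)) \<and>
     obj ys = (\<Sum>a\<in>P. (d a / B powr (1 / r)) powr (r / (r + 1))) powr ((r + 1) / r)"
  proof -
    have c2: "\<forall>y. feas y \<longrightarrow> obj ys \<le> obj y" using opt by blast
    have c3: "\<forall>y. feas y \<and> obj y = obj ys \<longrightarrow> (\<forall>a\<in>Pp. y a = ys a)" using uniq by blast
    show ?thesis using feas_ys c2 c3 val by (intro conjI)
  qed
  then show ?thesis unfolding Let_def feas_def obj_def ys_def S_def Pp_def al_def .
qed



lemma st_path_empty: "st_path S tail head s s {}"
  unfolding st_path_def by (rule exI[of _ "[]"], rule exI[of _ "[s]"]) auto

lemma st_path_sub: "st_path S tail head s t P \<Longrightarrow> P \<subseteq> S"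
  unfolding st_path_def by auto

lemma st_path_finite: "st_path S tail head s t P \<Longrightarrow> finite P"
  unfolding st_path_def by auto

lemma st_path_mono: "st_path S tail head s t P \<Longrightarrow> S \<subseteq> S' \<Longrightarrow> st_path S' tail head s t P"
  unfolding st_path_def by blast

lemma st_path_ext:
  assumes "st_path S tail head s u P" "a \<in> S"
    and "(tail a = u \<and> head a = v) \<or> (head a = u \<and> tail a = v)"
  shows "\<exists>P'. st_path S tail head s v P' \<and> P' \<subseteq> insert a P"
proof -
  obtain as vs where p: "distinct as" "distinct vs" "length vs = length as + 1"
    "vs ! 0 = s" "vs ! length as = u" "set as \<subseteq> S" "P = set as"
    "\<forall>i < length as. (tail (as ! i) = vs ! i \<and> head (as ! i) = vs ! (i + 1)) \<or>
            (head (as ! i) = vs ! i \<and> tail (as ! i) = vs ! (i + 1))"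
    using assms(1) unfolding st_path_def by blast
  show ?thesis
  proof (cases "v \<in> set vs")
    case True
    then obtain j where j: "j < length vs" "vs ! j = v" by (auto simp: in_set_conv_nth)
    have jl: "j \<le> length as" using j p(3) by simp
    have "st_path S tail head s v (set (take j as))"
      unfolding st_path_def
    proof (intro exI conjI)
      show "distinct (take j as)" using p(1) by simp
      show "distinct (take (j+1) vs)" using p(2) by simp
      show "length (take (j+1) vs) = length (take j as) + 1" using p(3) jl by simp
      show "take (j+1) vs ! 0 = s" using p(4) by simp
      show "take (j+1) vs ! length (take j as) = v" using j jl by simp
      show "set (take j as) \<subseteq> S" using p(6) by (meson order_trans set_take_subset)
      show "set (take j as) = set (take j as)" ..
      show "\<forall>i < length (take j as). (tail (take j as ! i) = take (j+1) vs ! i \<and> head (take j as ! i) = take (j+1) vs ! (i + 1)) \<or>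
            (head (take j as ! i) = take (j+1) vs ! i \<and> tail (take j as ! i) = take (j+1) vs ! (i + 1))"
        using p(8) jl by auto
    qed
    moreover have "set (take j as) \<subseteq> insert a P" using p(7) by (meson set_take_subset subset_insertI2)
    ultimately show ?thesis by blast
  next
    case False
    have anot: "a \<notin> set as"
    proof
      assume "a \<in> set as"
      then obtain i where i: "i < length as" "as ! i = a" by (auto simp: in_set_conv_nth)
      have "vs ! i \<in> set vs" "vs ! (i+1) \<in> set vs" using i p(3) by auto
      then show False using p(8) i assms(3) False by metis
    qed
    have "st_path S tail head s v (set (as @ [a]))"
      unfolding st_path_def
    proof (intro exI conjI)
      show "distinct (as @ [a])" using p(1) anot by simp
      show "distinct (vs @ [v])" using p(2) False by simp
      show "length (vs @ [v]) = length (as @ [a]) + 1" using p(3) by simp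
      show "(vs @ [v]) ! 0 = s" using p(3,4) by (simp add: nth_append)
      show "(vs @ [v]) ! length (as @ [a]) = v" using p(3) by (simp add: nth_append)
      show "set (as @ [a]) \<subseteq> S" using p(6) assms(2) by simp
      show "set (as @ [a]) = set (as @ [a])" ..
      show "\<forall>i < length (as @ [a]). (tail ((as @ [a]) ! i) = (vs @ [v]) ! i \<and> head ((as @ [a]) ! i) = (vs @ [v]) ! (i + 1)) \<or>
            (head ((as @ [a]) ! i) = (vs @ [v]) ! i \<and> tail ((as @ [a]) ! i) = (vs @ [v]) ! (i + 1))"
      proof (intro allI impI)
        fix i assume i: "i < length (as @ [a])"
        show "(tail ((as @ [a]) ! i) = (vs @ [v]) ! i \<and> head ((as @ [a]) ! i) = (vs @ [v]) ! (i + 1)) \<or>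
            (head ((as @ [a]) ! i) = (vs @ [v]) ! i \<and> tail ((as @ [a]) ! i) = (vs @ [v]) ! (i + 1))"
        proof (cases "i < length as")
          case True
          then show ?thesis using p(8) p(3) by (simp add: nth_append)
        next
          case False
          then have "i = length as" using i by simp
          then show ?thesis using p(3) p(5) assms(3) by (simp add: nth_append)
        qed
      qed
    qed
    moreover have "set (as @ [a]) \<subseteq> insert a P" using p(7) by auto
    ultimately show ?thesis by blast
  qed
qed

lemma st_path_reach:
  assumes "(s, v) \<in> (undirected_rel S tail head)\<^sup>*"
  shows "\<exists>P. st_path S tail head s v P"
  using assms
proof (induction rule: rtrancl_induct)
  case base
  show ?case using st_path_empty[of S tail head s] by blast
next
  case (step u v)
  then obtain P where P: "st_path S tail head s u P" by blast
  from step(2) obtain a where "a \<in> S" "(tail a = u \<and> head a = v) \<or> (head a = u \<and> tail a = v)"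
    unfolding undirected_rel_def by blast
  then show ?case using st_path_ext[OF P] by blast
qed



lemma net_group:
  fixes f :: "'a \<Rightarrow> real" and p :: "'v \<Rightarrow> real" and h :: "'a \<Rightarrow> 'v"
  assumes "finite V" "finite S" "\<forall>a\<in>S. h a \<in> V"
  shows "(\<Sum>a\<in>S. f a * p (h a)) = (\<Sum>v\<in>V. p v * (\<Sum>a\<in>{a\<in>S. h a = v}. f a))"
proof -
  have "(\<Sum>a\<in>S. f a * p (h a)) = (\<Sum>v\<in>V. (\<Sum>a\<in>{a\<in>S. h a = v}. f a * p (h a)))"
    using assms by (intro sum.group[symmetric]) auto
  also have "\<dots> = (\<Sum>v\<in>V. (\<Sum>a\<in>{a\<in>S. h a = v}. f a) * p v)"
  proof (intro sum.cong refl)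
    fix v
    have "(\<Sum>a\<in>{a\<in>S. h a = v}. f a * p (h a)) = (\<Sum>a\<in>{a\<in>S. h a = v}. f a * p v)"
      by (rule sum.cong) auto
    also have "\<dots> = (\<Sum>a\<in>{a\<in>S. h a = v}. f a) * p v" by (rule sum_distrib_right[symmetric])
    finally show "(\<Sum>a\<in>{a\<in>S. h a = v}. f a * p (h a)) = (\<Sum>a\<in>{a\<in>S. h a = v}. f a) * p v" .
  qed
  also have "\<dots> = (\<Sum>v\<in>V. p v * (\<Sum>a\<in>{a\<in>S. h a = v}. f a))"
    by (simp add: mult.commute)
  finally show ?thesis .
qed

lemma flow_path:
  fixes f w :: "'a \<Rightarrow> real"
  assumes finV: "finite V" and finS: "finite S" and ends: "\<forall>a\<in>S. tail a \<in> V \<and> head a \<in> V"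
    and sV: "s \<in> V" and tV: "t \<in> V" and st: "s \<noteq> t"
    and flow: "is_unit_flow V S tail head s t f" and wnn: "\<forall>a\<in>S. w a \<ge> 0"
  shows "\<exists>P. st_path S tail head s t P \<and> (\<Sum>a\<in>P. w a) \<le> (\<Sum>a\<in>S. w a * \<bar>f a\<bar>)"
proof -
  define R where "R v = {P. st_path S tail head s v P}" for v
  define F where "F = (\<Sum>a\<in>S. w a * \<bar>f a\<bar>)"
  define WS where "WS = (\<Sum>a\<in>S. w a)"
  define M where "M = F + WS + 1"
  define pi where "pi v = (if R v \<noteq> {} then Min ((\<lambda>P. \<Sum>a\<in>P. w a) ` R v) else M)" for v
  have finR: "finite (R v)" for v
  proof -
    have "R v \<subseteq> Pow S"
    proof
      fix P assume "P \<in> R v"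
      then show "P \<in> Pow S" using st_path_sub[of S tail head s v P] by (simp add: R_def)
    qed
    moreover have "finite (Pow S)" using finS by simp
    ultimately show ?thesis by (rule finite_subset)
  qed
  have WSP: "(\<Sum>a\<in>P. w a) \<le> WS" if "P \<in> R v" for P v
    unfolding WS_def using that finS wnn st_path_sub[of S tail head s v P]
    by (intro sum_mono2) (auto simp: R_def)
  have Pnn: "(\<Sum>a\<in>P. w a) \<ge> 0" if "P \<in> R v" for P v
    using that wnn st_path_sub[of S tail head s v P] by (intro sum_nonneg) (auto simp: R_def)
  have Fnn: "F \<ge> 0" unfolding F_def using wnn by (intro sum_nonneg) auto
  have WSnn: "WS \<ge> 0" unfolding WS_def using wnn by (intro sum_nonneg) auto
  have pi_le: "pi v \<le> (\<Sum>a\<in>P. w a)" if "P \<in> R v" for P v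
  proof -
    have "R v \<noteq> {}" using that by blast
    then have "pi v = Min ((\<lambda>P. \<Sum>a\<in>P. w a) ` R v)" by (simp add: pi_def)
    also have "\<dots> \<le> (\<Sum>a\<in>P. w a)" using that finR[of v] by (intro Min_le) auto
    finally show ?thesis .
  qed
  have pi_ex: "\<exists>P\<in>R v. pi v = (\<Sum>a\<in>P. w a)" if "R v \<noteq> {}" for v
  proof -
    have "Min ((\<lambda>P. \<Sum>a\<in>P. w a) ` R v) \<in> (\<lambda>P. \<Sum>a\<in>P. w a) ` R v"
      using that finR by (intro Min_in) auto
    then show ?thesis using that by (auto simp: pi_def)
  qed
  have pi_M: "pi v \<le> M" for v
  proof (cases "R v = {}")
    case True then show ?thesis by (simp add: pi_def)
  next
    case False
    then obtain P where "P \<in> R v" by blast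
    then show ?thesis using pi_le[of P v] WSP[of P v] Fnn unfolding M_def by linarith
  qed
  have tri: "pi v \<le> pi u + w a"
    if a: "a \<in> S" "(tail a = u \<and> head a = v) \<or> (head a = u \<and> tail a = v)" for a u v
  proof (cases "R u = {}")
    case True
    then have "pi u = M" by (simp add: pi_def)
    then show ?thesis using pi_M[of v] wnn a(1) by auto
  next
    case False
    then obtain P where P: "P \<in> R u" "pi u = (\<Sum>a\<in>P. w a)" using pi_ex by blast
    then obtain P' where P': "st_path S tail head s v P'" "P' \<subseteq> insert a P"
      using st_path_ext[of S tail head s u P a v] a by (auto simp: R_def)
    have finP: "finite P" using P(1) st_path_finite by (auto simp: R_def)
    have PS: "P \<subseteq> S" using P(1) st_path_sub[of S tail head s u P] by (auto simp: R_def)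
    have "(\<Sum>a\<in>P'. w a) \<le> (\<Sum>a\<in>insert a P. w a)"
      using P' finP PS a(1) wnn by (intro sum_mono2) auto
    also have "\<dots> \<le> w a + (\<Sum>a\<in>P. w a)"
      using finP wnn a(1) by (cases "a \<in> P") (auto simp: insert_absorb)
    finally have "(\<Sum>a\<in>P'. w a) \<le> pi u + w a" using P(2) by simp
    moreover have "pi v \<le> (\<Sum>a\<in>P'. w a)" using pi_le[of P' v] P'(1) by (simp add: R_def)
    ultimately show ?thesis by linarith
  qed
  have absd: "\<bar>pi (head a) - pi (tail a)\<bar> \<le> w a" if "a \<in> S" for a
    using tri[OF that, of "tail a" "head a"] tri[OF that, of "head a" "tail a"] by auto
  have termw: "f a * (pi (head a) - pi (tail a)) \<le> w a * \<bar>f a\<bar>" if "a \<in> S" for a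
  proof -
    have "f a * (pi (head a) - pi (tail a)) \<le> \<bar>f a\<bar> * \<bar>pi (head a) - pi (tail a)\<bar>"
      by (metis abs_ge_self abs_mult)
    also have "\<dots> \<le> \<bar>f a\<bar> * w a" using absd[OF that] by (intro mult_left_mono) auto
    finally show ?thesis by (simp add: mult.commute)
  qed
  have sum1: "(\<Sum>a\<in>S. f a * (pi (head a) - pi (tail a))) \<le> F"
    unfolding F_def using termw by (intro sum_mono) auto
  have hd: "(\<Sum>a\<in>S. f a * pi (head a)) = (\<Sum>v\<in>V. pi v * (\<Sum>a\<in>{a\<in>S. head a = v}. f a))"
    using net_group[of V S head f pi] finV finS ends by auto
  have tl: "(\<Sum>a\<in>S. f a * pi (tail a)) = (\<Sum>v\<in>V. pi v * (\<Sum>a\<in>{a\<in>S. tail a = v}. f a))"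
    using net_group[of V S tail f pi] finV finS ends by auto
  have "(\<Sum>a\<in>S. f a * (pi (head a) - pi (tail a)))
      = (\<Sum>a\<in>S. f a * pi (head a)) - (\<Sum>a\<in>S. f a * pi (tail a))"
    by (simp add: right_diff_distrib sum_subtractf)
  also have "\<dots> = - (\<Sum>v\<in>V. pi v * ((\<Sum>a\<in>{a\<in>S. tail a = v}. f a) - (\<Sum>a\<in>{a\<in>S. head a = v}. f a)))"
    unfolding hd tl by (simp add: right_diff_distrib sum_subtractf)
  also have "\<dots> = - (\<Sum>v\<in>V. pi v * (if v = s then 1 else if v = t then -1 else 0))"
    using flow unfolding is_unit_flow_def by (intro arg_cong[where f=uminus] sum.cong) auto
  also have "(\<Sum>v\<in>V. pi v * (if v = s then 1 else if v = t then -1 else 0))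
      = (\<Sum>v\<in>V. (if v = s then pi s else 0) + (if v = t then - pi t else 0))"
    using st by (intro sum.cong) auto
  also have "\<dots> = pi s - pi t"
    using finV sV tV by (simp add: sum.distrib)
  finally have "pi t - pi s \<le> F" using sum1 by simp
  moreover have "pi s \<le> 0" using pi_le[of "{}" s] st_path_empty[of S tail head s] by (simp add: R_def)
  ultimately have "pi t \<le> F" by linarith
  have "R t \<noteq> {}"
  proof
    assume "R t = {}"
    then have "pi t = M" by (simp add: pi_def)
    then show False using \<open>pi t \<le> F\<close> WSnn unfolding M_def by linarith
  qed
  then obtain P where "P \<in> R t" "pi t = (\<Sum>a\<in>P. w a)" using pi_ex by blast
  then show ?thesis using \<open>pi t \<le> F\<close> unfolding R_def F_def by auto
qed

lemma path_flow:
  fixes f :: "'a \<Rightarrow> real"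
  assumes p: "st_path A tail head s t P" and st: "s \<noteq> t"
  shows "\<exists>f. is_unit_flow V P tail head s t f \<and> (\<forall>a\<in>P. \<bar>f a\<bar> = 1)"
proof -
  obtain as vs where p: "distinct as" "distinct vs" "length vs = length as + 1"
    "vs ! 0 = s" "vs ! length as = t" "set as \<subseteq> A" "P = set as"
    "\<forall>i < length as. (tail (as ! i) = vs ! i \<and> head (as ! i) = vs ! (i + 1)) \<or>
            (head (as ! i) = vs ! i \<and> tail (as ! i) = vs ! (i + 1))"
    using p unfolding st_path_def by blast
  define n where "n = length as"
  define sg where "sg i = (if tail (as ! i) = vs ! i then 1 else (-1::real))" for i
  define g where "g i a = (if a = as ! i then sg i else (0::real))" for i a
  define f where "f a = (\<Sum>i<n. g i a)" for a
  have finP: "finite P" using p(7) by simp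
  have inP: "as ! i \<in> P" if "i < n" for i using that p(7) n_def by simp
  have vne: "vs ! i \<noteq> vs ! (i+1)" if "i < n" for i
    using p(2) p(3) that n_def by (simp add: nth_eq_iff_index_eq)
  have gnet: "(\<Sum>a\<in>{a\<in>P. tail a = v}. g i a) - (\<Sum>a\<in>{a\<in>P. head a = v}. g i a)
      = (if v = vs ! i then 1 else 0) - (if v = vs ! (i+1) then 1 else 0)" if i: "i < n" for i v
  proof -
    have e1: "(\<Sum>a\<in>{a\<in>P. tail a = v}. g i a) = (if tail (as ! i) = v then g i (as ! i) else 0)"
      unfolding g_def using finP inP[OF i] by simp
    have e2: "(\<Sum>a\<in>{a\<in>P. head a = v}. g i a) = (if head (as ! i) = v then g i (as ! i) else 0)"
      unfolding g_def using finP inP[OF i] by simp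
    show ?thesis unfolding e1 e2 using p(8) i vne[OF i] n_def by (auto simp: g_def sg_def)
  qed
  have flow: "is_unit_flow V P tail head s t f"
    unfolding is_unit_flow_def
  proof
    fix v assume "v \<in> V"
    have "(\<Sum>a\<in>{a\<in>P. tail a = v}. f a) - (\<Sum>a\<in>{a\<in>P. head a = v}. f a)
        = (\<Sum>i<n. (\<Sum>a\<in>{a\<in>P. tail a = v}. g i a) - (\<Sum>a\<in>{a\<in>P. head a = v}. g i a))"
      unfolding f_def by (simp add: sum.swap[of _ _ "{..<n}"] sum_subtractf)
    also have "\<dots> = (\<Sum>i<n. (if v = vs ! i then 1 else 0) - (if v = vs ! (Suc i) then 1 else 0))"
      using gnet by (intro sum.cong) auto
    also have "\<dots> = (if v = vs ! 0 then 1 else 0) - (if v = vs ! n then 1 else 0)"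
      by (rule sum_lessThan_telescope')
    also have "\<dots> = (if v = s then 1 else if v = t then -1 else 0)"
      using p(4) p(5) st n_def by auto
    finally show "(\<Sum>a\<in>{a\<in>P. tail a = v}. f a) - (\<Sum>a\<in>{a\<in>P. head a = v}. f a)
        = (if v = s then 1 else if v = t then -1 else 0)" .
  qed
  have abs1: "\<bar>f a\<bar> = 1" if aP: "a \<in> P" for a
  proof -
    obtain j where j: "j < n" "as ! j = a" using aP p(7) n_def by (auto simp: in_set_conv_nth)
    have "f a = (\<Sum>i<n. if i = j then g j a else 0)"
      unfolding f_def
    proof (intro sum.cong refl)
      fix i assume "i \<in> {..<n}"
      then have "i < n" by simp
      then have "as ! i = as ! j \<longleftrightarrow> i = j" using nth_eq_iff_index_eq[OF p(1), of i j] j(1) n_def by simp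
      then show "g i a = (if i = j then g j a else 0)" using j by (auto simp: g_def)
    qed
    also have "\<dots> = g j a" using j by simp
    finally show ?thesis by (simp add: g_def sg_def j)
  qed
  show ?thesis using flow abs1 by blast
qed



lemma young0:
  fixes a b al be :: real
  assumes "a \<ge> 0" "b \<ge> 0" "al \<ge> 0" "be \<ge> 0" "al + be = 1"
  shows "a powr al * b powr be \<le> al * a + be * b"
proof (cases "a = 0 \<or> b = 0")
  case True
  then show ?thesis using assms by auto
next
  case False
  then show ?thesis using assms Youngs_inequality_0[of al be a b] by auto
qed

lemma holder2:
  fixes a b :: "'i \<Rightarrow> real" and al be :: real
  assumes fin: "finite I" and nn: "\<forall>i\<in>I. a i \<ge> 0 \<and> b i \<ge> 0"
    and al: "al > 0" and be: "be > 0" and ab: "al + be = 1"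
  shows "(\<Sum>i\<in>I. a i powr al * b i powr be) \<le> (\<Sum>i\<in>I. a i) powr al * (\<Sum>i\<in>I. b i) powr be"
proof -
  define SA where "SA = (\<Sum>i\<in>I. a i)"
  define SB where "SB = (\<Sum>i\<in>I. b i)"
  have SAnn: "SA \<ge> 0" unfolding SA_def using nn by (intro sum_nonneg) auto
  have SBnn: "SB \<ge> 0" unfolding SB_def using nn by (intro sum_nonneg) auto
  show ?thesis
  proof (cases "SA = 0 \<or> SB = 0")
    case True
    have "\<forall>i\<in>I. a i powr al * b i powr be = 0"
    proof
      fix i assume i: "i \<in> I"
      from True show "a i powr al * b i powr be = 0"
      proof
        assume "SA = 0"
        then have "a i = 0" using sum_nonneg_eq_0_iff[OF fin, of a] nn i unfolding SA_def by auto
        then show ?thesis by simp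
      next
        assume "SB = 0"
        then have "b i = 0" using sum_nonneg_eq_0_iff[OF fin, of b] nn i unfolding SB_def by auto
        then show ?thesis by simp
      qed
    qed
    then have "(\<Sum>i\<in>I. a i powr al * b i powr be) = 0" by (rule sum.neutral)
    then show ?thesis unfolding SA_def[symmetric] SB_def[symmetric] by simp
  next
    case False
    then have SAp: "SA > 0" and SBp: "SB > 0" using SAnn SBnn by auto
    have trm: "(a i / SA) powr al * (b i / SB) powr be \<le> al * (a i / SA) + be * (b i / SB)" if "i \<in> I" for i
      using nn that SAp SBp al be ab by (intro young0) auto
    have eqt: "(a i / SA) powr al * (b i / SB) powr be = (a i powr al * b i powr be) / (SA powr al * SB powr be)" if "i \<in> I" for i
      using nn that SAp SBp by (simp add: powr_divide)
    have "(\<Sum>i\<in>I. (a i powr al * b i powr be) / (SA powr al * SB powr be)) \<le> (\<Sum>i\<in>I. al * (a i / SA) + be * (b i / SB))"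
      using trm eqt by (intro sum_mono) auto
    also have "\<dots> = (\<Sum>i\<in>I. al * (a i / SA)) + (\<Sum>i\<in>I. be * (b i / SB))"
      by (rule sum.distrib)
    also have "\<dots> = al * (SA / SA) + be * (SB / SB)"
      unfolding sum_distrib_left[symmetric] sum_divide_distrib[symmetric] SA_def SB_def ..
    also have "\<dots> = 1" using SAp SBp ab by simp
    finally have "(\<Sum>i\<in>I. a i powr al * b i powr be) / (SA powr al * SB powr be) \<le> 1"
      by (simp add: sum_divide_distrib)
    moreover have "SA powr al * SB powr be > 0" using SAp SBp by simp
    ultimately show ?thesis unfolding SA_def[symmetric] SB_def[symmetric] by (simp add: divide_le_eq)
  qed
qed

lemma lower_one:
  fixes r B' :: real and c y f :: "'a \<Rightarrow> real"
  assumes r: "r \<ge> 1" and B': "B' > 0" and finV: "finite V" and finA: "finite A"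
    and ends: "\<forall>a\<in>A. tail a \<in> V \<and> head a \<in> V" and sV: "s \<in> V" and tV: "t \<in> V" and st: "s \<noteq> t"
    and cnn: "\<forall>a\<in>A. c a \<ge> 0" and ynn: "\<forall>a\<in>A. y a \<ge> 0"
    and flow: "is_unit_flow V (supp A y) tail head s t f"
    and Phi: "(\<Sum>a\<in>supp A y. \<bar>f a\<bar> powr (r + 1) / (y a) powr r) \<le> B'"
  shows "\<exists>P. st_path A tail head s t P \<and> P \<subseteq> supp A y \<and>
          (\<Sum>a\<in>P. c a powr (r/(r+1))) powr ((r+1)/r) / B' powr (1/r) \<le> (\<Sum>a\<in>A. c a * y a)"
proof -
  define S where "S = supp A y"
  define al where "al = r/(r+1)"
  define be where "be = 1/(r+1)"
  define Phi where "Phi = (\<Sum>a\<in>S. \<bar>f a\<bar> powr (r + 1) / (y a) powr r)"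
  define C where "C = (\<Sum>a\<in>A. c a * y a)"
  have r0: "r > 0" using r by simp
  have SA: "S \<subseteq> A" by (auto simp: S_def supp_def)
  have finS: "finite S" using finA SA finite_subset by blast
  have ypos: "y a > 0" if "a \<in> S" for a using that by (auto simp: S_def supp_def)
  have CS: "C = (\<Sum>a\<in>S. c a * y a)"
    unfolding C_def
  proof (rule sum.mono_neutral_right[OF finA SA, symmetric, symmetric])
    show "\<forall>i\<in>A - S. c i * y i = 0"
    proof
      fix i assume "i \<in> A - S"
      then have "y i = 0" using ynn by (force simp: S_def supp_def)
      then show "c i * y i = 0" by simp
    qed
  qed
  obtain P where P: "st_path S tail head s t P" "(\<Sum>a\<in>P. c a powr al) \<le> (\<Sum>a\<in>S. c a powr al * \<bar>f a\<bar>)"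
    using flow_path[OF finV finS _ sV tV st, of tail head f "\<lambda>a. c a powr al"] flow ends SA
    unfolding S_def[symmetric] by fastforce
  have prod: "(c a * y a) powr al * (\<bar>f a\<bar> powr (r + 1) / (y a) powr r) powr be = c a powr al * \<bar>f a\<bar>"
    if "a \<in> S" for a
  proof -
    have y: "y a > 0" using ypos[OF that] .
    have c: "c a \<ge> 0" using cnn SA that by auto
    have "(c a * y a) powr al * (\<bar>f a\<bar> powr (r + 1) / (y a) powr r) powr be
        = c a powr al * y a powr al * (\<bar>f a\<bar> powr ((r + 1) * be) / (y a) powr (r * be))"
      using y c by (simp add: powr_mult powr_divide powr_powr)
    also have "(r + 1) * be = 1" using r0 by (simp add: be_def)
    also have "r * be = al" by (simp add: be_def al_def)
    finally show ?thesis using y by simp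
  qed
  have H: "(\<Sum>a\<in>S. c a powr al * \<bar>f a\<bar>) \<le> C powr al * Phi powr be"
  proof -
    have "(\<Sum>a\<in>S. c a powr al * \<bar>f a\<bar>) = (\<Sum>a\<in>S. (c a * y a) powr al * (\<bar>f a\<bar> powr (r + 1) / (y a) powr r) powr be)"
      using prod by simp
    also have "\<dots> \<le> (\<Sum>a\<in>S. c a * y a) powr al * Phi powr be"
      unfolding Phi_def
    proof (rule holder2[OF finS])
      show "\<forall>i\<in>S. 0 \<le> c i * y i \<and> 0 \<le> \<bar>f i\<bar> powr (r + 1) / y i powr r"
      proof
        fix i assume i: "i \<in> S"
        have "c i \<ge> 0" using cnn SA i by auto
        moreover have "y i > 0" using ypos[OF i] .
        ultimately show "0 \<le> c i * y i \<and> 0 \<le> \<bar>f i\<bar> powr (r + 1) / y i powr r" by simp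
      qed
      show "al > 0" "be > 0" "al + be = 1" using r0 by (auto simp: al_def be_def field_simps)
    qed
    finally show ?thesis using CS by simp
  qed
  have Cnn: "C \<ge> 0" unfolding C_def using cnn ynn by (intro sum_nonneg) auto
  have Phinn: "Phi \<ge> 0" unfolding Phi_def by (intro sum_nonneg) auto
  define W where "W = (\<Sum>a\<in>P. c a powr al)"
  have Wnn: "W \<ge> 0" unfolding W_def by (intro sum_nonneg) auto
  have "W \<le> C powr al * Phi powr be" using P(2) H by (simp add: W_def)
  then have "W powr ((r+1)/r) \<le> (C powr al * Phi powr be) powr ((r+1)/r)"
    using Wnn r0 by (intro powr_mono2) auto
  also have "\<dots> = C * Phi powr (1/r)"
  proof -
    have "(C powr al * Phi powr be) powr ((r+1)/r) = C powr (al * ((r+1)/r)) * Phi powr (be * ((r+1)/r))"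
      using Cnn Phinn by (simp add: powr_mult powr_powr)
    also have "al * ((r+1)/r) = 1" using r0 by (simp add: al_def)
    also have "be * ((r+1)/r) = 1/r" using r0 by (simp add: be_def)
    finally show ?thesis using Cnn by simp
  qed
  also have "\<dots> \<le> C * B' powr (1/r)"
    using Phi Phinn Cnn r0 unfolding Phi_def S_def by (intro mult_left_mono powr_mono2) auto
  finally have "W powr ((r+1)/r) / B' powr (1/r) \<le> C" using B' by (simp add: divide_le_eq)
  moreover have "st_path A tail head s t P" using st_path_mono[OF P(1) SA] .
  moreover have "P \<subseteq> S" using st_path_sub[OF P(1)] .
  ultimately show ?thesis unfolding W_def al_def C_def S_def by blast
qed



lemma st_path_nonempty: "st_path S tail head s t P \<Longrightarrow> s \<noteq> t \<Longrightarrow> P \<noteq> {}"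
  unfolding st_path_def by auto

theorem mainTheorem8:
  fixes r B :: real
    and V :: "'v set" and A :: "'a set"
    and tail head :: "'a \<Rightarrow> 'v" and s t :: 'v
    and c \<gamma> :: "'a \<Rightarrow> real"
  assumes "r \<ge> 1" and "B > 0"
    and "finite V" and "finite A"
    and "\<forall>a\<in>A. tail a \<in> V \<and> head a \<in> V"
    and "s \<in> V" and "t \<in> V" and "s \<noteq> t"
    and "weakly_connected V A tail head"
    and "\<forall>a\<in>A. c a \<ge> 0" and "\<forall>a\<in>A. \<gamma> a \<ge> 0"
  shows
    "(\<forall>(P :: 'a set) (d :: 'a \<Rightarrow> real).
        finite P \<and> (\<forall>a\<in>P. d a \<ge> 0) \<and> {a\<in>P. d a > 0} \<noteq> {} \<longrightarrow>
        (let Pp = {a\<in>P. d a > 0};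
             S = (\<Sum>a'\<in>P. d a' powr (r / (r + 1)));
             ys = (\<lambda>a. S powr (1 / r) / (d a powr (1 / (r + 1)) * B powr (1 / r)));
             feas = (\<lambda>y :: 'a \<Rightarrow> real. (\<forall>a\<in>Pp. y a > 0) \<and> (\<Sum>a\<in>Pp. y a powr (- r)) = B);
             obj = (\<lambda>y :: 'a \<Rightarrow> real. \<Sum>a\<in>Pp. d a * y a)
         in feas ys \<and>
            (\<forall>y. feas y \<longrightarrow> obj ys \<le> obj y) \<and>
            (\<forall>y. feas y \<and> obj y = obj ys \<longrightarrow> (\<forall>a\<in>Pp. y a = ys a)) \<and>
            obj ys = (\<Sum>a\<in>P. (d a / B powr (1 / r)) powr (r / (r + 1))) powr ((r + 1) / r)))
     \<and>
     NDP_value V A tail head s t r c \<gamma> (\<lambda>_. \<infinity>) B =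
       ereal (Min {(\<Sum>a\<in>P. (c a / B powr (1 / r)) powr (r / (r + 1))) powr ((r + 1) / r)
                    + (\<Sum>a\<in>P. \<gamma> a) | P. st_path A tail head s t P})"
proof (intro conjI allI impI)
  note r = assms(1) and B = assms(2) and finV = assms(3) and finA = assms(4) and ends = assms(5)
    and sV = assms(6) and tV = assms(7) and st = assms(8) and wc = assms(9)
    and cnn = assms(10) and gnn = assms(11)
  show "let Pp = {a\<in>P. d a > 0};
             S = (\<Sum>a'\<in>P. d a' powr (r / (r + 1)));
             ys = (\<lambda>a. S powr (1 / r) / (d a powr (1 / (r + 1)) * B powr (1 / r)));
             feas = (\<lambda>y :: 'a \<Rightarrow> real. (\<forall>a\<in>Pp. y a > 0) \<and> (\<Sum>a\<in>Pp. y a powr (- r)) = B);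
             obj = (\<lambda>y :: 'a \<Rightarrow> real. \<Sum>a\<in>Pp. d a * y a)
         in feas ys \<and>
            (\<forall>y. feas y \<longrightarrow> obj ys \<le> obj y) \<and>
            (\<forall>y. feas y \<and> obj y = obj ys \<longrightarrow> (\<forall>a\<in>Pp. y a = ys a)) \<and>
            obj ys = (\<Sum>a\<in>P. (d a / B powr (1 / r)) powr (r / (r + 1))) powr ((r + 1) / r)"
    if "finite P \<and> (\<forall>a\<in>P. d a \<ge> 0) \<and> {a\<in>P. d a > 0} \<noteq> {}" for P :: "'a set" and d :: "'a \<Rightarrow> real"
    using part1[OF r B] that by blast
  define val where "val P = (\<Sum>a\<in>P. (c a / B powr (1 / r)) powr (r / (r + 1))) powr ((r + 1) / r)
                    + (\<Sum>a\<in>P. \<gamma> a)" for P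
  define Paths where "Paths = {P. st_path A tail head s t P}"
  define m where "m = Min {(\<Sum>a\<in>P. (c a / B powr (1 / r)) powr (r / (r + 1))) powr ((r + 1) / r)
                    + (\<Sum>a\<in>P. \<gamma> a) | P. st_path A tail head s t P}"
  have r0: "r > 0" using r by simp
  have mset: "{(\<Sum>a\<in>P. (c a / B powr (1 / r)) powr (r / (r + 1))) powr ((r + 1) / r)
                    + (\<Sum>a\<in>P. \<gamma> a) | P. st_path A tail head s t P} = val ` Paths"
    unfolding val_def Paths_def by blast
  have finPaths: "finite Paths"
  proof -
    have "Paths \<subseteq> Pow A"
    proof
      fix P assume "P \<in> Paths"
      then show "P \<in> Pow A" using st_path_sub[of A tail head s t P] by (simp add: Paths_def)
    qed
    moreover have "finite (Pow A)" using finA by simp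
    ultimately show ?thesis by (rule finite_subset)
  qed
  have nePaths: "Paths \<noteq> {}"
  proof -
    have "(s, t) \<in> (undirected_rel A tail head)\<^sup>*" using wc sV tV unfolding weakly_connected_def by blast
    then have "\<exists>P. st_path A tail head s t P" by (rule st_path_reach)
    then obtain P where "st_path A tail head s t P" by blast
    then show ?thesis by (auto simp: Paths_def)
  qed
  have m_le: "m \<le> val P" if "P \<in> Paths" for P
    unfolding m_def mset using finPaths that by (intro Min_le) auto
  obtain P0 where P0: "P0 \<in> Paths" "m = val P0"
  proof -
    have "m \<in> val ` Paths" unfolding m_def mset using finPaths nePaths by (intro Min_in) auto
    then show ?thesis using that by blast
  qed
  have PA: "P \<subseteq> A" if "P \<in> Paths" for P using that st_path_sub[of A tail head s t P] by (simp add: Paths_def)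
  have finP: "finite P" if "P \<in> Paths" for P using that st_path_finite[of A tail head s t P] by (simp add: Paths_def)
  have val_alt: "val P = (\<Sum>a\<in>P. c a powr (r/(r+1))) powr ((r + 1) / r) / B powr (1 / r) + (\<Sum>a\<in>P. \<gamma> a)"
    if "P \<in> Paths" for P
    unfolding val_def using val_eq[OF r0 B, of P c] cnn PA[OF that] by auto
  have gP: "(\<Sum>a\<in>P. \<gamma> a) \<ge> 0" if "P \<in> Paths" for P
    using gnn PA[OF that] by (intro sum_nonneg) auto
  have Wnn: "(\<Sum>a\<in>P. c a powr (r/(r+1))) powr ((r + 1) / r) / B powr (1 / r) \<ge> 0" for P
    by simp
  have val_nn: "val P \<ge> 0" if "P \<in> Paths" for P
    using val_alt[OF that] gP[OF that] Wnn[of P] by simp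
  let ?X = "{ereal (\<Sum>a\<in>A. c a * y a + \<gamma> a * x a) | x y.
            (\<forall>a\<in>A. x a \<in> {0, 1}) \<and> (\<forall>a\<in>A. y a \<ge> 0) \<and>
            eff_res V A tail head s t r y \<le> ereal B \<and>
            (\<forall>a\<in>A. ereal (y a) \<le> \<infinity>) \<and>
            (\<forall>a\<in>A. y a > 0 \<longrightarrow> x a = 1)}"
  have NDP: "NDP_value V A tail head s t r c \<gamma> (\<lambda>_. \<infinity>) B = Inf ?X"
    unfolding NDP_value_def ..
  have lower: "ereal m \<le> Inf ?X"
  proof (rule Inf_greatest)
    fix z assume "z \<in> ?X"
    then obtain x y where z: "z = ereal (\<Sum>a\<in>A. c a * y a + \<gamma> a * x a)"
      and x01: "\<forall>a\<in>A. x a \<in> {0, 1}" and ynn: "\<forall>a\<in>A. y a \<ge> 0"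
      and eff: "eff_res V A tail head s t r y \<le> ereal B"
      and xy: "\<forall>a\<in>A. y a > 0 \<longrightarrow> x a = 1" by blast
    define C where "C = (\<Sum>a\<in>A. c a * y a)"
    define G where "G = (\<Sum>a\<in>A. \<gamma> a * x a)"
    have zCG: "z = ereal (C + G)" unfolding z C_def G_def by (simp add: sum.distrib)
    have Cnn: "C \<ge> 0" unfolding C_def using cnn ynn by (intro sum_nonneg) auto
    have gx: "\<gamma> a * x a \<ge> 0" if "a \<in> A" for a using gnn x01 that by auto
    have Gnn: "G \<ge> 0" unfolding G_def using gx by (intro sum_nonneg) auto
    have "m \<le> C + G"
    proof (rule ccontr)
      assume "\<not> m \<le> C + G"
      then have lt: "C + G < m" by simp
      then have mpos: "m > 0" using Cnn Gnn by linarith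
      define lam where "lam = (C + G + m) / (2 * m)"
      have lam0: "lam > 0" using mpos Cnn Gnn by (simp add: lam_def)
      have lam1: "lam < 1" using mpos lt by (simp add: lam_def field_simps)
      have lamr: "lam powr r < 1" using powr_less_mono2[OF r0 _ lam1] lam0 by simp
      have lamr0: "lam powr r > 0" using lam0 by simp
      define B' where "B' = B / lam powr r"
      have B'B: "B' > B" unfolding B'_def using B lamr lamr0 by (simp add: field_simps)
      have B'0: "B' > 0" using B'B B by simp
      have "ereal B < ereal B'" using B'B by simp
      with eff have "eff_res V A tail head s t r y < ereal B'" by (rule le_less_trans)
      then obtain f where flow: "is_unit_flow V (supp A y) tail head s t f"
        and Phi: "ereal (\<Sum>a\<in>supp A y. \<bar>f a\<bar> powr (r + 1) / (y a) powr r) < ereal B'"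
        unfolding eff_res_def Inf_less_iff by blast
      obtain P where P: "st_path A tail head s t P" "P \<subseteq> supp A y"
        "(\<Sum>a\<in>P. c a powr (r/(r+1))) powr ((r+1)/r) / B' powr (1/r) \<le> C"
        using lower_one[OF r B'0 finV finA ends sV tV st cnn ynn flow] Phi unfolding C_def by fastforce
      have PP: "P \<in> Paths" using P(1) by (simp add: Paths_def)
      define W where "W = (\<Sum>a\<in>P. c a powr (r/(r+1))) powr ((r+1)/r)"
      have Wnn: "W \<ge> 0" by (simp add: W_def)
      have Bp: "B' powr (1/r) = B powr (1/r) / lam" 
      proof -
        have "B' powr (1/r) = B powr (1/r) / (lam powr r) powr (1/r)"
          unfolding B'_def using B lamr0 by (simp add: powr_divide)
        also have "(lam powr r) powr (1/r) = lam" using lam0 r0 by (simp add: powr_powr)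
        finally show ?thesis .
      qed
      have "lam * (W / B powr (1/r)) = W / B' powr (1/r)" unfolding Bp using lam0 by simp
      then have c1: "lam * (W / B powr (1/r)) \<le> C" using P(3) unfolding W_def by simp
      have c2: "(\<Sum>a\<in>P. \<gamma> a) \<le> G"
      proof -
        have "(\<Sum>a\<in>P. \<gamma> a) = (\<Sum>a\<in>P. \<gamma> a * x a)"
        proof (rule sum.cong)
          fix a assume "a \<in> P"
          then have "a \<in> A" "y a > 0" using P(2) by (auto simp: supp_def)
          then show "\<gamma> a = \<gamma> a * x a" using xy by simp
        qed simp
        also have "\<dots> \<le> G" unfolding G_def using finA PA[OF PP] gx by (intro sum_mono2) auto
        finally show ?thesis .
      qed
      have "lam * val P \<le> C + G"
      proof -
        have "lam * val P = lam * (W / B powr (1/r)) + lam * (\<Sum>a\<in>P. \<gamma> a)"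
          using val_alt[OF PP] unfolding W_def by (simp add: algebra_simps)
        also have "lam * (\<Sum>a\<in>P. \<gamma> a) \<le> (\<Sum>a\<in>P. \<gamma> a)"
          using lam1 gP[OF PP] by (simp add: mult_left_le_one_le lam0 less_imp_le)
        finally show ?thesis using c1 c2 by linarith
      qed
      moreover have "lam * m \<le> lam * val P" using m_le[OF PP] lam0 by simp
      moreover have "lam * m = (C + G + m) / 2" using mpos by (simp add: lam_def)
      ultimately have "(C + G + m) / 2 \<le> C + G" by linarith
      then show False using lt by (simp add: field_simps)
    qed
    then show "ereal m \<le> z" unfolding zCG by simp
  qed
  have upper: "Inf ?X \<le> ereal m"
  proof (rule ereal_le_epsilon2)
    fix e :: real assume e: "0 < e"
    have P0A: "P0 \<subseteq> A" using PA[OF P0(1)] .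
    have finP0: "finite P0" using finP[OF P0(1)] .
    have P0ne: "P0 \<noteq> {}" using P0(1) st st_path_nonempty[of A tail head s t P0] by (simp add: Paths_def)
    define g where "g dl = (\<Sum>a\<in>P0. ((c a + dl) / B powr (1 / r)) powr (r / (r + 1))) powr ((r + 1) / r)" for dl
    have g0: "val P0 = g 0 + (\<Sum>a\<in>P0. \<gamma> a)" by (simp add: val_def g_def)
    have tend: "(g \<longlongrightarrow> g 0) (at_right 0)"
    proof -
      have t1: "((\<lambda>dl. ((c a + dl) / B powr (1 / r)) powr (r / (r + 1))) \<longlongrightarrow> ((c a + 0) / B powr (1 / r)) powr (r / (r + 1))) (at_right 0)"
        if "a \<in> P0" for a
      proof (rule tendsto_powr')
        show "((\<lambda>dl. (c a + dl) / B powr (1 / r)) \<longlongrightarrow> (c a + 0) / B powr (1 / r)) (at_right 0)"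
          using B by (intro tendsto_intros) simp
        show "((\<lambda>dl. r / (r + 1)) \<longlongrightarrow> r / (r + 1)) (at_right 0)" by simp
        have ca: "c a \<ge> 0" using cnn P0A that by auto
        have Bp0: "B powr (1/r) > 0" using B by simp
        have "\<forall>\<^sub>F dl in at_right 0. 0 \<le> (c a + dl) / B powr (1 / r)"
          using eventually_at_right_less[of "0::real"] by eventually_elim (use ca Bp0 in simp)
        then show "(c a + 0) / B powr (1 / r) \<noteq> 0 \<or> (r / (r + 1) > 0 \<and> (\<forall>\<^sub>F dl in at_right 0. 0 \<le> (c a + dl) / B powr (1 / r)))"
          using r0 by simp
      qed
      have t2: "((\<lambda>dl. (\<Sum>a\<in>P0. ((c a + dl) / B powr (1 / r)) powr (r / (r + 1)))) \<longlongrightarrow> (\<Sum>a\<in>P0. ((c a + 0) / B powr (1 / r)) powr (r / (r + 1)))) (at_right 0)"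
        using t1 by (rule tendsto_sum)
      show ?thesis unfolding g_def
      proof (rule tendsto_powr'[OF t2])
        show "((\<lambda>dl. (r + 1) / r) \<longlongrightarrow> (r + 1) / r) (at_right 0)" by simp
        show "(\<Sum>a\<in>P0. ((c a + 0) / B powr (1 / r)) powr (r / (r + 1))) \<noteq> 0 \<or>
          ((r + 1) / r > 0 \<and> (\<forall>\<^sub>F dl in at_right 0. 0 \<le> (\<Sum>a\<in>P0. ((c a + dl) / B powr (1 / r)) powr (r / (r + 1)))))"
          using r0 by (simp add: sum_nonneg)
      qed
    qed
    have "\<forall>\<^sub>F dl in at_right 0. g dl < g 0 + e"
      using order_tendstoD(2)[OF tend] e by simp
    then have "\<forall>\<^sub>F dl in at_right 0. dl > 0 \<and> g dl < g 0 + e"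
      using eventually_at_right_less[of "0::real"] by eventually_elim auto
    then obtain dl where dl: "dl > 0" "g dl < g 0 + e"
      using eventually_happens'[OF trivial_limit_at_right_real] by blast
    define d where "d a = c a + dl" for a
    have dpos: "\<forall>a\<in>P0. d a > 0" using cnn P0A dl(1) by (force simp: d_def)
    have Ppeq: "{a\<in>P0. d a > 0} = P0" using dpos by auto
    define S0 where "S0 = (\<Sum>a'\<in>P0. d a' powr (r / (r + 1)))"
    define ys where "ys a = S0 powr (1 / r) / (d a powr (1 / (r + 1)) * B powr (1 / r))" for a
    have pre1: "\<forall>a\<in>P0. 0 \<le> d a" using dpos by (auto simp: less_imp_le)
    have pre2: "{a\<in>P0. 0 < d a} \<noteq> {}" using Ppeq P0ne by simp
    have p1: "(\<forall>a\<in>P0. ys a > 0) \<and> (\<Sum>a\<in>P0. ys a powr (- r)) = B \<and>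
        (\<Sum>a\<in>P0. d a * ys a) = (\<Sum>a\<in>P0. (d a / B powr (1 / r)) powr (r / (r + 1))) powr ((r + 1) / r)"
      using part1[OF r B finP0 pre1 pre2] unfolding Let_def Ppeq ys_def S0_def by blast
    have yspos: "\<forall>a\<in>P0. ys a > 0" using p1 by blast
    have ysB: "(\<Sum>a\<in>P0. ys a powr (- r)) = B" using p1 by blast
    have ysobj: "(\<Sum>a\<in>P0. d a * ys a) = g dl" using p1 by (simp add: g_def d_def)
    define y where "y a = (if a \<in> P0 then ys a else 0)" for a
    define x where "x a = (if a \<in> P0 then 1 else (0::real))" for a
    have suppy: "supp A y = P0" using P0A yspos by (auto simp: supp_def y_def)
    obtain f where flow: "is_unit_flow V P0 tail head s t f" and fabs: "\<forall>a\<in>P0. \<bar>f a\<bar> = 1"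
      using path_flow[of A tail head s t P0 V] P0(1) st by (auto simp: Paths_def)
    have "eff_res V A tail head s t r y \<le> ereal (\<Sum>a\<in>supp A y. \<bar>f a\<bar> powr (r + 1) / (y a) powr r)"
      unfolding eff_res_def using flow suppy by (intro Inf_lower) auto
    also have "(\<Sum>a\<in>supp A y. \<bar>f a\<bar> powr (r + 1) / (y a) powr r) = (\<Sum>a\<in>P0. ys a powr (- r))"
      unfolding suppy using fabs yspos by (intro sum.cong refl) (simp add: y_def powr_minus_divide)
    finally have effB: "eff_res V A tail head s t r y \<le> ereal B" using ysB by simp
    define cost where "cost = (\<Sum>a\<in>A. c a * y a + \<gamma> a * x a)"
    have costX: "ereal cost \<in> ?X"
      unfolding cost_def
    proof (intro CollectI exI conjI)
      show "\<forall>a\<in>A. x a \<in> {0, 1}" by (simp add: x_def)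
      show "\<forall>a\<in>A. y a \<ge> 0" using yspos by (auto simp: y_def less_imp_le)
      show "eff_res V A tail head s t r y \<le> ereal B" by (rule effB)
      show "\<forall>a\<in>A. ereal (y a) \<le> \<infinity>" by simp
      show "\<forall>a\<in>A. y a > 0 \<longrightarrow> x a = 1" by (simp add: x_def y_def)
    qed (rule refl)
    have "cost = (\<Sum>a\<in>A. if a \<in> P0 then c a * ys a + \<gamma> a else 0)"
      unfolding cost_def by (intro sum.cong refl) (simp add: x_def y_def)
    also have "\<dots> = (\<Sum>a\<in>A \<inter> P0. c a * ys a + \<gamma> a)" by (rule sum.inter_restrict[OF finA, symmetric])
    also have "A \<inter> P0 = P0" using P0A by blast
    finally have "cost = (\<Sum>a\<in>P0. c a * ys a) + (\<Sum>a\<in>P0. \<gamma> a)" by (simp add: sum.distrib)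
    also have "(\<Sum>a\<in>P0. c a * ys a) \<le> (\<Sum>a\<in>P0. d a * ys a)"
      using yspos dl(1) by (intro sum_mono) (simp add: d_def distrib_right less_imp_le)
    finally have "cost \<le> g dl + (\<Sum>a\<in>P0. \<gamma> a)" using ysobj by simp
    then have "cost \<le> m + e" using dl(2) g0 P0(2) by simp
    have "Inf ?X \<le> ereal cost" using costX by (rule Inf_lower)
    also have "\<dots> \<le> ereal (m + e)" using \<open>cost \<le> m + e\<close> by simp
    finally show "Inf ?X \<le> ereal m + ereal e" by simp
  qed
  show "NDP_value V A tail head s t r c \<gamma> (\<lambda>_. \<infinity>) B = ereal m"
    unfolding NDP using lower upper by (rule antisym[rotated])
qed


end
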